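(* Let $d\ge2$, $n\ge1$, and let $H$ be a Hermitian operator on $(\mathbb{C}^d)^{\otimes n}$ acting nontrivially only on a $k$-qudit subsystem. Then for every $t\in\mathbb{R}$, the unitary $U_t=e^{-itH}$ satisfies $\mathrm{CiS}[U_t]\le k$.
   Context: Let $V=\mathbb{Z}_d\times\mathbb{Z}_d$; for $a=(s,t)\in V$, $P_a=X^sZ^t$ with $X|j\rangle=|j+1\bmod d\rangle$, $Z|j\rangle=e^{2\pi ij/d}|j\rangle$; $P_{\vec a}=\bigotimes_iP_{a_i}$, $|\vec a|=\#\{i:a_i\ne(0,0)\}$. $\|A\|_2=(d^{-n}\mathrm{Tr}(A^\dagger A))^{1/2}$. For $\|O\|_2=1$, $P_O[\vec a]=d^{-2n}|\mathrm{Tr}(OP_{\vec a})|^2$, $I[O]=\sum_{\vec a}|\vec a|P_O[\vec a]$, and $\mathrm{CiS}[U]=\max_{\|O\|_2=1}|I[UOU^\dagger]-I[O]|$. *)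

theory Defs
  imports Complex_Main
begin

text \<open>A computational basis state of
  (C^d)^{\<otimes>n} is a digit string j :: nat \<Rightarrow> nat with j i < d for i < n
  and j i = 0 for i \<ge> n.  Operators are complex matrices indexed by basis
  states; only entries on basis states matter.\<close>

type_synonym qop = "(nat \<Rightarrow> nat) \<Rightarrow> (nat \<Rightarrow> nat) \<Rightarrow> complex"

definition basis :: "nat \<Rightarrow> nat \<Rightarrow> (nat \<Rightarrow> nat) set" where
  "basis d n = {j. (\<forall>i<n. j i < d) \<and> (\<forall>i\<ge>n. j i = 0)}"

definition mmul :: "nat \<Rightarrow> nat \<Rightarrow> qop \<Rightarrow> qop \<Rightarrow> qop" where
  "mmul d n A B = (\<lambda>k j. \<Sum>l\<in>basis d n. A k l * B l j)"

definition adj :: "qop \<Rightarrow> qop" where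
  "adj A = (\<lambda>k j. cnj (A j k))"

definition idop :: qop where
  "idop = (\<lambda>k j. if k = j then 1 else 0)"

definition tr :: "nat \<Rightarrow> nat \<Rightarrow> qop \<Rightarrow> complex" where
  "tr d n A = (\<Sum>j\<in>basis d n. A j j)"

fun mpow :: "nat \<Rightarrow> nat \<Rightarrow> qop \<Rightarrow> nat \<Rightarrow> qop" where
  "mpow d n A 0 = idop"
| "mpow d n A (Suc m) = mmul d n A (mpow d n A m)"

definition mexp :: "nat \<Rightarrow> nat \<Rightarrow> qop \<Rightarrow> qop" where
  "mexp d n A = (\<lambda>k j. \<Sum>m. mpow d n A m k j / of_nat (fact m))"

definition evol :: "nat \<Rightarrow> nat \<Rightarrow> qop \<Rightarrow> real \<Rightarrow> qop" where
  "evol d n H t = mexp d n (\<lambda>k j. - (\<i> * complex_of_real t) * H k j)"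

definition hermitian :: "nat \<Rightarrow> nat \<Rightarrow> qop \<Rightarrow> bool" where
  "hermitian d n H \<longleftrightarrow> (\<forall>k\<in>basis d n. \<forall>j\<in>basis d n. H k j = cnj (H j k))"

definition norm2 :: "nat \<Rightarrow> nat \<Rightarrow> qop \<Rightarrow> real" where
  "norm2 d n A = sqrt (Re (tr d n (mmul d n (adj A) A)) / real d ^ n)"

definition omega :: "nat \<Rightarrow> complex" where
  "omega d = cis (2 * pi / real d)"

text \<open>Single-qudit Weyl operator X^s Z^t: <k|X^s Z^t|j> = [k = j+s mod d] \<omega>^{t j}.\<close>
definition pauli1 :: "nat \<Rightarrow> nat \<times> nat \<Rightarrow> nat \<Rightarrow> nat \<Rightarrow> complex" where
  "pauli1 d a k j = (if k = (j + fst a) mod d then omega d ^ (snd a * j) else 0)"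

definition pauli :: "nat \<Rightarrow> nat \<Rightarrow> (nat \<Rightarrow> nat \<times> nat) \<Rightarrow> qop" where
  "pauli d n a = (\<lambda>k j. \<Prod>i<n. pauli1 d (a i) (k i) (j i))"

definition pvecs :: "nat \<Rightarrow> nat \<Rightarrow> (nat \<Rightarrow> nat \<times> nat) set" where
  "pvecs d n = {a. (\<forall>i<n. fst (a i) < d \<and> snd (a i) < d) \<and> (\<forall>i\<ge>n. a i = (0, 0))}"

definition weight :: "nat \<Rightarrow> (nat \<Rightarrow> nat \<times> nat) \<Rightarrow> nat" where
  "weight n a = card {i. i < n \<and> a i \<noteq> (0, 0)}"

definition pdist :: "nat \<Rightarrow> nat \<Rightarrow> qop \<Rightarrow> (nat \<Rightarrow> nat \<times> nat) \<Rightarrow> real" where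
  "pdist d n B a = (cmod (tr d n (mmul d n B (pauli d n a))))\<^sup>2 / real d ^ (2 * n)"

definition influence :: "nat \<Rightarrow> nat \<Rightarrow> qop \<Rightarrow> real" where
  "influence d n B = (\<Sum>a\<in>pvecs d n. real (weight n a) * pdist d n B a)"

definition CiS :: "nat \<Rightarrow> nat \<Rightarrow> qop \<Rightarrow> real" where
  "CiS d n U = Sup {\<bar>influence d n (mmul d n (mmul d n U B) (adj U)) - influence d n B\<bar>
                    | B. norm2 d n B = 1}"

text \<open>H acts nontrivially only on the qudits in S: H = h_S \<otimes> I_{rest}.\<close>
definition restr :: "nat set \<Rightarrow> (nat \<Rightarrow> nat) \<Rightarrow> (nat \<Rightarrow> nat)" where
  "restr S j = (\<lambda>i. if i \<in> S then j i else 0)"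

definition acts_only_on :: "nat \<Rightarrow> nat \<Rightarrow> nat set \<Rightarrow> qop \<Rightarrow> bool" where
  "acts_only_on d n S H \<longleftrightarrow> (\<exists>h :: qop. \<forall>k\<in>basis d n. \<forall>j\<in>basis d n.
      H k j = (if (\<forall>i<n. i \<notin> S \<longrightarrow> k i = j i) then h (restr S k) (restr S j) else 0))"

end

theory Submission
  imports Defs
begin

definition PS :: "(nat \<Rightarrow> 'a set) \<Rightarrow> 'a \<Rightarrow> nat \<Rightarrow> (nat \<Rightarrow> 'a) set" where
  "PS D z n = {f. (\<forall>m<n. f m \<in> D m) \<and> (\<forall>m\<ge>n. f m = z)}"

lemma PS_0: "PS D z 0 = {\<lambda>_. z}"
  unfolding PS_def by auto

lemma PS_Suc: "PS D z (Suc n) = (\<lambda>(f,x). f(n:=x)) ` (PS D z n \<times> D n)"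
proof (rule set_eqI, rule iffI)
  fix g assume g: "g \<in> PS D z (Suc n)"
  have "g = (\<lambda>(f,x). f(n:=x)) (g(n:=z), g n)" by auto
  moreover have "(g(n:=z), g n) \<in> PS D z n \<times> D n"
  proof -
    have g1: "\<forall>m<Suc n. g m \<in> D m" and g2: "\<forall>m\<ge>Suc n. g m = z" using g unfolding PS_def by auto
    have "\<forall>m<n. (g(n:=z)) m \<in> D m" using g1 by simp
    moreover have "\<forall>m\<ge>n. (g(n:=z)) m = z"
    proof (intro allI impI)
      fix m assume "n \<le> m"
      then show "(g(n:=z)) m = z" using g2 by (cases "m = n") auto
    qed
    ultimately show ?thesis using g1 unfolding PS_def by auto
  qed
  ultimately show "g \<in> (\<lambda>(f,x). f(n:=x)) ` (PS D z n \<times> D n)" by blast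
next
  fix g assume "g \<in> (\<lambda>(f,x). f(n:=x)) ` (PS D z n \<times> D n)"
  then show "g \<in> PS D z (Suc n)" unfolding PS_def
    by (auto simp: less_Suc_eq)
qed

lemma PS_inj: "inj_on (\<lambda>(f,x). f(n:=x)) (PS D z n \<times> D n)"
proof (rule inj_onI, clarsimp)
  fix f x g y assume "f \<in> PS D z n" "g \<in> PS D z n" "f(n := x) = g(n := y)"
  then have e: "\<And>m. (f(n := x)) m = (g(n := y)) m" and fz: "f n = z" and gz: "g n = z"
    unfolding PS_def by auto
  have "x = y" using e[of n] by simp
  moreover have "f m = g m" for m using e[of m] fz gz by (cases "m = n") auto
  ultimately show "f = g \<and> x = y" by auto
qed

lemma finite_PS: "(\<And>m. m < n \<Longrightarrow> finite (D m)) \<Longrightarrow> finite (PS D z n)"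
  by (induction n) (auto simp: PS_0 PS_Suc)

lemma sum_prod_PS:
  fixes \<phi> :: "nat \<Rightarrow> 'b \<Rightarrow> 'c::comm_semiring_1"
  assumes "\<And>m. m < n \<Longrightarrow> finite (D m)"
  shows "(\<Sum>f\<in>PS D z n. \<Prod>m<n. \<phi> m (f m)) = (\<Prod>m<n. \<Sum>x\<in>D m. \<phi> m x)"
  using assms
proof (induction n)
  case 0
  then show ?case by (simp add: PS_0)
next
  case (Suc n)
  have fin: "finite (PS D z n)" using Suc.prems by (intro finite_PS) auto
  have "(\<Sum>f\<in>PS D z (Suc n). \<Prod>m<Suc n. \<phi> m (f m))
      = (\<Sum>p\<in>PS D z n \<times> D n. \<Prod>m<Suc n. \<phi> m (((\<lambda>(f,x). f(n:=x)) p) m))"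
    unfolding PS_Suc by (subst sum.reindex[OF PS_inj]) (simp add: o_def)
  also have "\<dots> = (\<Sum>f\<in>PS D z n. \<Sum>x\<in>D n. \<Prod>m<Suc n. \<phi> m ((f(n:=x)) m))"
    by (subst sum.cartesian_product) (simp add: case_prod_unfold)
  also have "\<dots> = (\<Sum>f\<in>PS D z n. \<Sum>x\<in>D n. (\<Prod>m<n. \<phi> m (f m)) * \<phi> n x)"
    by (intro sum.cong refl) (simp add: lessThan_Suc mult.commute)
  also have "\<dots> = (\<Sum>f\<in>PS D z n. \<Prod>m<n. \<phi> m (f m)) * (\<Sum>x\<in>D n. \<phi> n x)"
    by (simp only: sum_product)
  also have "\<dots> = (\<Prod>m<Suc n. \<Sum>x\<in>D m. \<phi> m x)"
    using Suc by (simp add: lessThan_Suc mult.commute)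
  finally show ?case .
qed

lemma basis_PS: "basis d n = PS (\<lambda>_. {..<d}) 0 n"
  unfolding basis_def PS_def by auto

lemma pvecs_PS: "pvecs d n = PS (\<lambda>_. {..<d} \<times> {..<d}) (0,0) n"
  unfolding pvecs_def PS_def by (auto simp: mem_Times_iff)

lemma finite_basis[simp]: "finite (basis d n)"
  unfolding basis_PS by (rule finite_PS) auto

lemma finite_pvecs[simp]: "finite (pvecs d n)"
  unfolding pvecs_PS by (rule finite_PS) auto

lemma card_basis: "card (basis d n) = d ^ n"
proof -
  have "real (card (basis d n)) = (\<Sum>f\<in>basis d n. \<Prod>m<n. (\<lambda>m x. 1::real) m (f m))" by simp
  also have "\<dots> = (\<Prod>m<n. \<Sum>x\<in>{..<d}. (1::real))"
    unfolding basis_PS by (rule sum_prod_PS) auto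
  finally show ?thesis by (simp add: of_nat_eq_iff[symmetric])
qed

definition eqb :: "nat \<Rightarrow> nat \<Rightarrow> qop \<Rightarrow> qop \<Rightarrow> bool" where
  "eqb d n A B \<longleftrightarrow> (\<forall>k\<in>basis d n. \<forall>j\<in>basis d n. A k j = B k j)"

lemma eqbD: "eqb d n A B \<Longrightarrow> k \<in> basis d n \<Longrightarrow> j \<in> basis d n \<Longrightarrow> A k j = B k j"
  unfolding eqb_def by blast

lemma eqb_refl[simp]: "eqb d n A A" unfolding eqb_def by blast
lemma eqb_sym: "eqb d n A B \<Longrightarrow> eqb d n B A" unfolding eqb_def by simp
lemma eqb_trans[trans]: "eqb d n A B \<Longrightarrow> eqb d n B C \<Longrightarrow> eqb d n A C" unfolding eqb_def by simp

lemma mmul_assoc: "mmul d n (mmul d n A B) C = mmul d n A (mmul d n B C)"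
  apply (rule ext)+
  apply (simp add: mmul_def sum_distrib_left sum_distrib_right mult.assoc)
  apply (rule sum.swap)
  done

lemma mmul_cong: "eqb d n A A' \<Longrightarrow> eqb d n B B' \<Longrightarrow> eqb d n (mmul d n A B) (mmul d n A' B')"
  unfolding eqb_def mmul_def by (auto intro!: sum.cong)

lemma sum_delta_mult1: "finite S \<Longrightarrow> (\<Sum>l\<in>S. (if k = l then 1 else 0) * f l) = (if k \<in> S then f k else (0::complex))"
proof -
  assume "finite S"
  have "(\<Sum>l\<in>S. (if k = l then 1 else 0) * f l) = (\<Sum>l\<in>S. if k = l then f l else 0)" by (rule sum.cong) auto
  then show ?thesis using \<open>finite S\<close> by simp
qed

lemma sum_delta_mult2: "finite S \<Longrightarrow> (\<Sum>l\<in>S. f l * (if l = k then 1 else 0)) = (if k \<in> S then f k else (0::complex))"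
proof -
  assume "finite S"
  have "(\<Sum>l\<in>S. f l * (if l = k then 1 else 0)) = (\<Sum>l\<in>S. if l = k then f l else 0)" by (rule sum.cong) auto
  then show ?thesis using \<open>finite S\<close> by simp
qed

lemma mmul_id_left: "eqb d n (mmul d n idop A) A"
  unfolding eqb_def mmul_def idop_def by (simp add: sum_delta_mult1)

lemma mmul_id_right: "eqb d n (mmul d n A idop) A"
  unfolding eqb_def mmul_def idop_def by (simp add: sum_delta_mult2)

lemma adj_mmul: "adj (mmul d n A B) = mmul d n (adj B) (adj A)"
  unfolding adj_def mmul_def by (simp add: mult.commute)

lemma adj_adj[simp]: "adj (adj A) = A"
  unfolding adj_def by simp

lemma adj_idop[simp]: "adj idop = idop"
  unfolding adj_def idop_def by (auto intro!: ext)

lemma adj_cong: "eqb d n A B \<Longrightarrow> eqb d n (adj A) (adj B)"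
  unfolding eqb_def adj_def by simp

lemma tr_cong: "eqb d n A B \<Longrightarrow> tr d n A = tr d n B"
  unfolding eqb_def tr_def by simp

lemma tr_comm: "tr d n (mmul d n A B) = tr d n (mmul d n B A)"
  unfolding tr_def mmul_def
  by (subst sum.swap) (simp add: mult.commute)

lemma mpow_cong: "eqb d n A A' \<Longrightarrow> eqb d n (mpow d n A m) (mpow d n A' m)"
  by (induction m) (auto intro: mmul_cong)

lemma mpow_scale: "mpow d n (\<lambda>k j. c * A k j) m = (\<lambda>k j. c ^ m * mpow d n A m k j)"
  by (induction m) (auto simp: mmul_def sum_distrib_left mult_ac idop_def intro!: ext)

lemma mpow_add: "eqb d n (mmul d n (mpow d n A m) (mpow d n A p)) (mpow d n A (m + p))"
proof (induction m)
  case 0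
  then show ?case by (simp add: mmul_id_left)
next
  case (Suc m)
  have 1: "mmul d n (mpow d n A (Suc m)) (mpow d n A p) = mmul d n A (mmul d n (mpow d n A m) (mpow d n A p))"
    by (simp only: mpow.simps mmul_assoc)
  have 2: "eqb d n (mmul d n A (mmul d n (mpow d n A m) (mpow d n A p))) (mmul d n A (mpow d n A (m + p)))"
    by (rule mmul_cong[OF eqb_refl Suc.IH])
  show ?case using 2 by (simp only: add_Suc mpow.simps mmul_assoc)
qed

lemma mpow_one: "eqb d n (mpow d n A 1) A"
  using mmul_id_right by simp

lemma mpow_comm: "eqb d n (mmul d n (mpow d n A m) A) (mmul d n A (mpow d n A m))"
proof -
  have "eqb d n (mmul d n (mpow d n A m) A) (mmul d n (mpow d n A m) (mpow d n A 1))"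
    by (rule mmul_cong[OF eqb_refl eqb_sym[OF mpow_one]])
  also have "eqb d n \<dots> (mpow d n A (m + 1))" by (rule mpow_add)
  finally show ?thesis by simp
qed

lemma adj_mpow: "eqb d n (adj (mpow d n A m)) (mpow d n (adj A) m)"
proof (induction m)
  case 0
  then show ?case by simp
next
  case (Suc m)
  have "eqb d n (adj (mpow d n A (Suc m))) (mmul d n (adj (mpow d n A m)) (adj A))"
    by (simp only: mpow.simps adj_mmul eqb_refl)
  also have "eqb d n \<dots> (mmul d n (mpow d n (adj A) m) (adj A))"
    by (rule mmul_cong[OF Suc.IH eqb_refl])
  also have "eqb d n \<dots> (mmul d n (adj A) (mpow d n (adj A) m))"
    by (rule mpow_comm)
  also have "eqb d n \<dots> (mpow d n (adj A) (Suc m))" by simp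
  finally show ?case .
qed

lemma mpow_commQ:
  assumes "eqb d n (mmul d n A Q) (mmul d n Q A)"
  shows "eqb d n (mmul d n (mpow d n A m) Q) (mmul d n Q (mpow d n A m))"
proof (induction m)
  case 0
  show ?case by (simp add: eqb_trans[OF mmul_id_left eqb_sym[OF mmul_id_right]])
next
  case (Suc m)
  have "eqb d n (mmul d n (mpow d n A (Suc m)) Q) (mmul d n A (mmul d n (mpow d n A m) Q))"
    by (simp only: mpow.simps mmul_assoc eqb_refl)
  also have "eqb d n \<dots> (mmul d n A (mmul d n Q (mpow d n A m)))"
    by (rule mmul_cong[OF eqb_refl Suc.IH])
  also have "eqb d n \<dots> (mmul d n (mmul d n A Q) (mpow d n A m))" by (simp only: mmul_assoc eqb_refl)
  also have "eqb d n \<dots> (mmul d n (mmul d n Q A) (mpow d n A m))"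
    by (rule mmul_cong[OF assms eqb_refl])
  also have "eqb d n \<dots> (mmul d n Q (mpow d n A (Suc m)))" by (simp only: mpow.simps mmul_assoc eqb_refl)
  finally show ?case .
qed

definition msz :: "nat \<Rightarrow> nat \<Rightarrow> qop \<Rightarrow> real" where
  "msz d n A = (\<Sum>k\<in>basis d n. \<Sum>l\<in>basis d n. cmod (A k l))"

lemma msz_nonneg: "0 \<le> msz d n A"
  unfolding msz_def by (intro sum_nonneg) auto

lemma mpow_bound:
  assumes "k \<in> basis d n" "j \<in> basis d n"
  shows "cmod (mpow d n A m k j) \<le> msz d n A ^ m"
  using assms
proof (induction m arbitrary: k j)
  case 0
  then show ?case by (simp add: idop_def)
next
  case (Suc m)
  have row: "(\<Sum>l\<in>basis d n. cmod (A k l)) \<le> msz d n A"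
    unfolding msz_def
    by (rule member_le_sum[where f="\<lambda>k. \<Sum>l\<in>basis d n. cmod (A k l)", OF Suc.prems(1)])
       (auto intro: sum_nonneg)
  have "cmod (mpow d n A (Suc m) k j) \<le> (\<Sum>l\<in>basis d n. cmod (A k l) * cmod (mpow d n A m l j))"
    by (simp add: mmul_def norm_mult[symmetric] norm_sum)
  also have "\<dots> \<le> (\<Sum>l\<in>basis d n. cmod (A k l) * msz d n A ^ m)"
    by (intro sum_mono mult_left_mono Suc.IH Suc.prems) auto
  also have "\<dots> \<le> msz d n A * msz d n A ^ m"
    by (simp add: sum_distrib_right[symmetric] mult_right_mono row msz_nonneg)
  finally show ?case by simp
qed

lemma summable_mpow:
  assumes "k \<in> basis d n" "j \<in> basis d n"
  shows "summable (\<lambda>m. norm (mpow d n A m k j / of_nat (fact m)))"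
proof (rule summable_comparison_test'[where N=0])
  show "summable (\<lambda>m. inverse (fact m) * msz d n A ^ m)" by (rule summable_exp)
  fix m :: nat
  have "norm (norm (mpow d n A m k j / of_nat (fact m))) = cmod (mpow d n A m k j) / fact m"
    by (simp add: norm_divide)
  also have "\<dots> \<le> msz d n A ^ m / fact m"
    by (intro divide_right_mono mpow_bound assms) auto
  finally show "norm (norm (mpow d n A m k j / of_nat (fact m))) \<le> inverse (fact m) * msz d n A ^ m"
    by (simp add: field_simps)
qed

lemma summable_mpow': "k \<in> basis d n \<Longrightarrow> j \<in> basis d n \<Longrightarrow>
   summable (\<lambda>m. mpow d n A m k j / of_nat (fact m))"
  by (rule summable_norm_cancel[OF summable_mpow])

lemma mpow_neg: "mpow d n (\<lambda>k j. - A k j) i = (\<lambda>k j. (-1) ^ i * mpow d n A i k j)"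
  using mpow_scale[of d n "-1" A i] by simp

lemma alt_fact_sum: "(\<Sum>i\<le>m. (-1) ^ i / (fact i * fact (m - i)) :: complex)
   = (if m = 0 then 1 else 0)"
proof (cases "m = 0")
  case True then show ?thesis by simp
next
  case False
  have "(\<Sum>i\<le>m. (-1) ^ i / (fact i * fact (m - i)) :: complex)
      = (\<Sum>i\<le>m. (-1) ^ i * of_nat (m choose i)) / fact m"
    by (simp add: sum_divide_distrib binomial_fact)
  also have "\<dots> = 0" using False by (simp add: choose_alternating_sum)
  finally show ?thesis using False by simp
qed

lemma mexp_inv:
  assumes BA: "eqb d n B (\<lambda>k j. - A k j)"
  shows "eqb d n (mmul d n (mexp d n B) (mexp d n A)) idop"
  unfolding eqb_def
proof (intro ballI)
  fix k j assume k: "k \<in> basis d n" and j: "j \<in> basis d n"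
  define b where "b l m = mpow d n B m k l / of_nat (fact m)" for l m
  define a where "a l m = mpow d n A m l j / of_nat (fact m)" for l m
  have sb: "summable (\<lambda>m. norm (b l m))" if "l \<in> basis d n" for l
    unfolding b_def using summable_mpow k that by blast
  have sa: "summable (\<lambda>m. norm (a l m))" if "l \<in> basis d n" for l
    unfolding a_def using summable_mpow j that by blast
  have bA: "b l i = (-1) ^ i * mpow d n A i k l / of_nat (fact i)" if "l \<in> basis d n" for l i
    using eqbD[OF mpow_cong[OF BA, of i] k that] unfolding b_def mpow_neg by simp
  have "mmul d n (mexp d n B) (mexp d n A) k j = (\<Sum>l\<in>basis d n. (\<Sum>m. b l m) * (\<Sum>m. a l m))"
    unfolding mmul_def mexp_def a_def b_def by simp
  also have "\<dots> = (\<Sum>l\<in>basis d n. \<Sum>m. \<Sum>i\<le>m. b l i * a l (m - i))"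
    by (intro sum.cong refl Cauchy_product sb sa)
  also have "\<dots> = (\<Sum>m. \<Sum>l\<in>basis d n. \<Sum>i\<le>m. b l i * a l (m - i))"
    by (rule suminf_sum[symmetric]) (intro summable_Cauchy_product sa sb)
  also have "\<dots> = (\<Sum>m. if m = 0 then idop k j else 0)"
  proof (rule suminf_cong)
    fix m
    have "(\<Sum>l\<in>basis d n. \<Sum>i\<le>m. b l i * a l (m - i))
        = (\<Sum>i\<le>m. \<Sum>l\<in>basis d n. b l i * a l (m - i))"
      by (rule sum.swap)
    also have "\<dots> = (\<Sum>i\<le>m. (-1) ^ i / (of_nat (fact i) * of_nat (fact (m - i)))
                      * mmul d n (mpow d n A i) (mpow d n A (m - i)) k j)"
      by (intro sum.cong refl) (simp add: bA a_def mmul_def sum_distrib_left sum_divide_distrib mult.assoc)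
    also have "\<dots> = (\<Sum>i\<le>m. (-1) ^ i / (of_nat (fact i) * of_nat (fact (m - i)))
                      * mpow d n A m k j)"
      by (intro sum.cong refl) (simp add: eqbD[OF mpow_add k j])
    also have "\<dots> = (\<Sum>i\<le>m. (-1) ^ i / (of_nat (fact i) * of_nat (fact (m - i))) :: complex)
                      * mpow d n A m k j"
      by (simp add: sum_distrib_right)
    also have "\<dots> = (if m = 0 then idop k j else 0)"
      by (simp add: alt_fact_sum)
    finally show "(\<Sum>l\<in>basis d n. \<Sum>i\<le>m. b l i * a l (m - i)) = (if m = 0 then idop k j else 0)" .
  qed
  also have "\<dots> = idop k j"
    by (subst suminf_finite[of "{0}"]) auto
  finally show "mmul d n (mexp d n B) (mexp d n A) k j = idop k j" .
qed

lemma mexp_commQ: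
  assumes "eqb d n (mmul d n A Q) (mmul d n Q A)"
  shows "eqb d n (mmul d n (mexp d n A) Q) (mmul d n Q (mexp d n A))"
  unfolding eqb_def
proof (intro ballI)
  fix k j assume k: "k \<in> basis d n" and j: "j \<in> basis d n"
  have "mmul d n (mexp d n A) Q k j = (\<Sum>l\<in>basis d n. \<Sum>m. mpow d n A m k l / of_nat (fact m) * Q l j)"
    unfolding mmul_def mexp_def
    by (intro sum.cong refl suminf_mult2 summable_mpow' k)
  also have "\<dots> = (\<Sum>m. \<Sum>l\<in>basis d n. mpow d n A m k l / of_nat (fact m) * Q l j)"
    by (rule suminf_sum[symmetric]) (intro summable_mult2 summable_mpow' k, simp)
  also have "\<dots> = (\<Sum>m. mmul d n (mpow d n A m) Q k j / of_nat (fact m))"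
    by (simp add: mmul_def sum_divide_distrib mult_ac)
  also have "\<dots> = (\<Sum>m. mmul d n Q (mpow d n A m) k j / of_nat (fact m))"
    by (simp add: eqbD[OF mpow_commQ[OF assms] k j])
  also have "\<dots> = (\<Sum>m. \<Sum>l\<in>basis d n. Q k l * (mpow d n A m l j / of_nat (fact m)))"
    by (simp add: mmul_def sum_divide_distrib mult_ac)
  also have "\<dots> = (\<Sum>l\<in>basis d n. \<Sum>m. Q k l * (mpow d n A m l j / of_nat (fact m)))"
    by (rule suminf_sum) (intro summable_mult summable_mpow' j, simp)
  also have "\<dots> = (\<Sum>l\<in>basis d n. Q k l * mexp d n A l j)"
  proof (rule sum.cong[OF refl])
    fix l assume l: "l \<in> basis d n"
    show "(\<Sum>m. Q k l * (mpow d n A m l j / of_nat (fact m))) = Q k l * mexp d n A l j"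
      unfolding mexp_def by (rule suminf_mult[OF summable_mpow'[OF l j]])
  qed
  also have "\<dots> = mmul d n Q (mexp d n A) k j"
    by (simp add: mmul_def)
  finally show "mmul d n (mexp d n A) Q k j = mmul d n Q (mexp d n A) k j" .
qed

lemma adj_mexp: "eqb d n (adj (mexp d n A)) (mexp d n (adj A))"
  unfolding eqb_def
proof (intro ballI)
  fix k j assume k: "k \<in> basis d n" and j: "j \<in> basis d n"
  have "(\<lambda>m. mpow d n A m j k / of_nat (fact m)) sums mexp d n A j k"
    unfolding mexp_def using summable_mpow'[OF j k] by (simp add: summable_sums)
  then have "(\<lambda>m. cnj (mpow d n A m j k / of_nat (fact m))) sums cnj (mexp d n A j k)"
    by (simp only: sums_cnj)
  then have "adj (mexp d n A) k j = (\<Sum>m. cnj (mpow d n A m j k / of_nat (fact m)))"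
    unfolding adj_def by (simp add: sums_iff)
  also have "\<dots> = (\<Sum>m. mpow d n (adj A) m k j / of_nat (fact m))"
    using eqbD[OF adj_mpow k j] by (simp add: adj_def)
  finally show "adj (mexp d n A) k j = mexp d n (adj A) k j" by (simp add: mexp_def)
qed

lemma evol_unitary:
  assumes "hermitian d n H"
  shows "eqb d n (mmul d n (adj (evol d n H t)) (evol d n H t)) idop"
proof -
  define A where "A = (\<lambda>k j. - (\<i> * complex_of_real t) * H k j)"
  have "eqb d n (adj A) (\<lambda>k j. - A k j)"
    unfolding eqb_def
  proof (intro ballI)
    fix k j assume "k \<in> basis d n" "j \<in> basis d n"
    then have "H k j = cnj (H j k)" using assms unfolding hermitian_def by blast
    then show "adj A k j = - A k j" by (simp add: adj_def A_def)
  qed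
  then have "eqb d n (mmul d n (mexp d n (adj A)) (mexp d n A)) idop"
    by (rule mexp_inv)
  moreover have "eqb d n (mmul d n (adj (mexp d n A)) (mexp d n A)) (mmul d n (mexp d n (adj A)) (mexp d n A))"
    by (rule mmul_cong[OF adj_mexp eqb_refl])
  ultimately have "eqb d n (mmul d n (adj (mexp d n A)) (mexp d n A)) idop" by (rule eqb_trans[rotated])
  then show ?thesis unfolding evol_def A_def .
qed

lemma omega_pow: "omega d ^ m = cis (real m * (2 * pi / real d))"
  unfolding omega_def by (simp add: DeMoivre)

lemma omega_sum:
  assumes d: "d \<ge> 1" and b: "b < d" and b': "b' < d"
  shows "(\<Sum>t<d. omega d ^ (t * b) * cnj (omega d ^ (t * b'))) = (if b = b' then of_nat d else 0)"
proof -
  define \<theta> where "\<theta> = 2 * pi * (real b - real b') / real d"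
  define z where "z = cis \<theta>"
  have tm: "omega d ^ (t * b) * cnj (omega d ^ (t * b')) = z ^ t" for t
  proof -
    have "omega d ^ (t * b) * cnj (omega d ^ (t * b'))
        = cis (real (t * b) * (2 * pi / real d) + - (real (t * b') * (2 * pi / real d)))"
      by (simp add: omega_pow cis_cnj cis_mult)
    also have "\<dots> = cis (real t * \<theta>)"
      unfolding \<theta>_def by (rule arg_cong[where f=cis]) (simp add: algebra_simps diff_divide_distrib)
    finally show ?thesis by (simp add: z_def DeMoivre)
  qed
  have S: "(\<Sum>t<d. omega d ^ (t * b) * cnj (omega d ^ (t * b'))) = (\<Sum>t<d. z ^ t)"
    by (simp only: tm)
  show ?thesis
  proof (cases "b = b'")
    case True
    then have "z = 1" by (simp add: z_def \<theta>_def)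
    then show ?thesis using True S by simp
  next
    case False
    have z1: "z \<noteq> 1"
    proof
      assume "z = 1"
      then have "cos \<theta> = 1" unfolding z_def by (metis complex.sel(1) cis.sel(1) one_complex.sel(1))
      then obtain q :: int where q: "\<theta> = q * 2 * pi" by (auto simp: cos_one_2pi_int)
      then have "pi * (real b * 2) = pi * (real b' * 2) + pi * (real_of_int q * (real d * 2))"
        using d unfolding \<theta>_def by (simp add: field_simps)
      then have "pi * (2 * (real b - real b' - real_of_int q * real d)) = 0"
        by (simp add: algebra_simps)
      then have "real b - real b' = real_of_int q * real d" by simp
      then have "int b - int b' = q * int d" by (metis of_int_eq_iff of_int_diff of_int_mult of_int_of_nat_eq)
      moreover have "\<bar>int b - int b'\<bar> < int d" using b b' by auto
      ultimately have "q = 0" using d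
        by (metis abs_mult abs_of_nat less_le_not_le mult_cancel_right1 mult_le_cancel_right1 of_nat_0_le_iff
                  zero_less_abs_iff zero_less_mult_iff zmult_eq_1_iff abs_zmult_eq_1 mult_eq_0_iff not_less linorder_not_le
                  abs_ge_self int_one_le_iff_zero_less zero_less_imp_eq_int)
      then show False using False \<open>int b - int b' = q * int d\<close> by simp
    qed
    have "z ^ d = cis (real d * \<theta>)" by (simp add: z_def DeMoivre)
    also have "real d * \<theta> = 2 * pi * real_of_int (int b - int b')" using d unfolding \<theta>_def by (simp add: field_simps)
    also have "cis (2 * pi * real_of_int (int b - int b')) = 1" by (rule cis_multiple_2pi) simp
    finally have zd: "z ^ d = 1" .
    have "(\<Sum>t<d. z ^ t) = 0" using z1 zd by (simp add: geometric_sum)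
    then show ?thesis using False S by simp
  qed
qed

lemma shift_inj:
  fixes b s s' d :: nat
  assumes h: "(b + s) mod d = (b + s') mod d" and "s < d" "s' < d"
  shows "s = s'"
proof (cases "s \<le> s'")
  case True
  obtain q where "b + s' = b + s + d * q" by (rule mod_eq_nat2E[OF h]) (use True in simp)
  then have "s' = s + d * q" by simp
  then show ?thesis using assms by (cases q) auto
next
  case False
  obtain q where "b + s = b + s' + d * q" by (rule mod_eq_nat1E[OF h]) (use False in simp)
  then have "s = s' + d * q" by simp
  then show ?thesis using assms by (cases q) auto
qed

lemma shift_hit:
  fixes a b d :: nat
  assumes "a < d" "b < d"
  shows "(b + (a + d - b) mod d) mod d = a"
proof -
  have "(b + (a + d - b) mod d) mod d = (b + (a + d - b)) mod d" by (rule mod_add_right_eq)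
  also have "b + (a + d - b) = a + d" using assms by simp
  also have "(a + d) mod d = a" using assms by simp
  finally show ?thesis .
qed

lemma shift_unique:
  fixes a b s d :: nat
  assumes "a < d" "b < d" "s < d"
  shows "a = (b + s) mod d \<longleftrightarrow> s = (a + d - b) mod d"
proof
  assume a: "a = (b + s) mod d"
  have "(b + s) mod d = (b + (a + d - b) mod d) mod d" using shift_hit[OF assms(1,2)] a by simp
  then show "s = (a + d - b) mod d" by (rule shift_inj) (use assms in auto)
next
  assume "s = (a + d - b) mod d"
  then show "a = (b + s) mod d" using shift_hit[OF assms(1,2)] by simp
qed

lemma shift_count:
  fixes a b d :: nat
  assumes "a < d" "b < d"
  shows "(\<Sum>s<d. if a = (b + s) mod d then (c::complex) else 0) = c"
proof -
  have "(\<Sum>s<d. if a = (b + s) mod d then c else 0) = (\<Sum>s<d. if s = (a + d - b) mod d then c else 0)"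
    using shift_unique[OF assms] by (intro sum.cong refl) auto
  also have "\<dots> = c" using assms by simp
  finally show ?thesis .
qed

lemma sig_full:
  assumes d: "d \<ge> 1" and "a < d" "b < d" "a' < d" "b' < d"
  shows "(\<Sum>x\<in>{..<d}\<times>{..<d}. pauli1 d x a b * cnj (pauli1 d x a' b')) = (if a = a' \<and> b = b' then of_nat d else 0)"
proof -
  have "(\<Sum>x\<in>{..<d}\<times>{..<d}. pauli1 d x a b * cnj (pauli1 d x a' b'))
      = (\<Sum>s<d. \<Sum>t<d. if a = (b + s) mod d \<and> a' = (b' + s) mod d then omega d ^ (t * b) * cnj (omega d ^ (t * b')) else 0)"
    by (simp only: sum.cartesian_product) (rule sum.cong[OF refl], auto simp: pauli1_def)
  also have "\<dots> = (\<Sum>s<d. if a = (b + s) mod d \<and> a' = (b' + s) mod d then (if b = b' then of_nat d else 0) else 0)"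
  proof (intro sum.cong refl)
    fix s assume "s \<in> {..<d}"
    show "(\<Sum>t<d. if a = (b + s) mod d \<and> a' = (b' + s) mod d then omega d ^ (t * b) * cnj (omega d ^ (t * b')) else 0)
       = (if a = (b + s) mod d \<and> a' = (b' + s) mod d then (if b = b' then of_nat d else 0) else 0)"
    proof (cases "a = (b + s) mod d \<and> a' = (b' + s) mod d")
      case True
      then show ?thesis using omega_sum[OF d \<open>b < d\<close> \<open>b' < d\<close>] by simp
    next
      case False
      then show ?thesis by (simp only: if_False sum.neutral_const)
    qed
  qed
  also have "\<dots> = (if a = a' \<and> b = b' then of_nat d else 0)"
  proof (cases "b = b'")
    case True
    then show ?thesis
    proof (cases "a = a'")
      case True
      then show ?thesis using \<open>b = b'\<close> shift_count[of a d b "of_nat d"] assms by simp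
    next
      case False
      then show ?thesis using \<open>b = b'\<close> by (auto intro!: sum.neutral)
    qed
  next
    case False
    then show ?thesis by simp
  qed
  finally show ?thesis .
qed

lemma sig_zero: "b < d \<Longrightarrow> pauli1 d (0,0) a b = (if a = b then 1 else 0)"
  unfolding pauli1_def by simp

lemma prod_if_point:
  assumes "i < n"
  shows "(\<Prod>m<n. if m = i then x else y) = x * (y::complex) ^ (n - 1)"
proof -
  have "(\<Prod>m<n. if m = i then x else y) = (if i = i then x else y) * (\<Prod>m\<in>{..<n} - {i}. if m = i then x else y)"
    using assms by (subst prod.remove[of _ i]) auto
  also have "(\<Prod>m\<in>{..<n} - {i}. if m = i then x else y) = (\<Prod>m\<in>{..<n} - {i}. y)"
    by (intro prod.cong refl) auto
  also have "\<dots> = y ^ (n - 1)" using assms by simp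
  finally show ?thesis by simp
qed

lemma prod_if_all: "(\<Prod>m<n. if P m then c else 0) = (if \<forall>m<n. P m then (c::complex) ^ n else 0)"
  by (induction n) (auto simp: less_Suc_eq)

definition FP :: "nat \<Rightarrow> nat \<Rightarrow> qop \<Rightarrow> (nat \<Rightarrow> nat \<times> nat) \<Rightarrow> complex" where
  "FP d n B a = tr d n (mmul d n B (pauli d n a))"

definition GT :: "nat \<Rightarrow> nat \<Rightarrow> qop \<Rightarrow> (nat \<Rightarrow> nat \<times> nat) \<Rightarrow> complex" where
  "GT d n B b = tr d n (mmul d n (mmul d n (mmul d n (adj B) (pauli d n b)) B) (adj (pauli d n b)))"

lemma sum_swap4:
  "(\<Sum>a\<in>A. \<Sum>k\<in>K. \<Sum>j\<in>J. \<Sum>k'\<in>K'. \<Sum>j'\<in>J'. T a k j k' j')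
   = (\<Sum>k\<in>K. \<Sum>j\<in>J. \<Sum>k'\<in>K'. \<Sum>j'\<in>J'. \<Sum>a\<in>A. T a k j k' j')"
proof -
  have "(\<Sum>a\<in>A. \<Sum>k\<in>K. \<Sum>j\<in>J. \<Sum>k'\<in>K'. \<Sum>j'\<in>J'. T a k j k' j')
      = (\<Sum>k\<in>K. \<Sum>a\<in>A. \<Sum>j\<in>J. \<Sum>k'\<in>K'. \<Sum>j'\<in>J'. T a k j k' j')" by (rule sum.swap)
  also have "\<dots> = (\<Sum>k\<in>K. \<Sum>j\<in>J. \<Sum>a\<in>A. \<Sum>k'\<in>K'. \<Sum>j'\<in>J'. T a k j k' j')"
    by (rule sum.cong[OF refl], rule sum.swap)
  also have "\<dots> = (\<Sum>k\<in>K. \<Sum>j\<in>J. \<Sum>k'\<in>K'. \<Sum>a\<in>A. \<Sum>j'\<in>J'. T a k j k' j')"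
    by (rule sum.cong[OF refl], rule sum.cong[OF refl], rule sum.swap)
  also have "\<dots> = (\<Sum>k\<in>K. \<Sum>j\<in>J. \<Sum>k'\<in>K'. \<Sum>j'\<in>J'. \<Sum>a\<in>A. T a k j k' j')"
    by (rule sum.cong[OF refl], rule sum.cong[OF refl], rule sum.cong[OF refl], rule sum.swap)
  finally show ?thesis .
qed

lemma reorder4:
  "(\<Sum>p\<in>S. \<Sum>s\<in>S. \<Sum>r\<in>S. \<Sum>q\<in>S. f p s r q) = (\<Sum>r\<in>S. \<Sum>s\<in>S. \<Sum>q\<in>S. \<Sum>p\<in>S. f p s r q)"
proof -
  have "(\<Sum>p\<in>S. \<Sum>s\<in>S. \<Sum>r\<in>S. \<Sum>q\<in>S. f p s r q) = (\<Sum>p\<in>S. \<Sum>r\<in>S. \<Sum>s\<in>S. \<Sum>q\<in>S. f p s r q)"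
    by (rule sum.cong[OF refl], rule sum.swap)
  also have "\<dots> = (\<Sum>r\<in>S. \<Sum>p\<in>S. \<Sum>s\<in>S. \<Sum>q\<in>S. f p s r q)" by (rule sum.swap)
  also have "\<dots> = (\<Sum>r\<in>S. \<Sum>s\<in>S. \<Sum>p\<in>S. \<Sum>q\<in>S. f p s r q)"
    by (rule sum.cong[OF refl], rule sum.swap)
  also have "\<dots> = (\<Sum>r\<in>S. \<Sum>s\<in>S. \<Sum>q\<in>S. \<Sum>p\<in>S. f p s r q)"
    by (rule sum.cong[OF refl], rule sum.cong[OF refl], rule sum.swap)
  finally show ?thesis .
qed

lemma pauli_prod_cnj:
  "pauli d n a j k * cnj (pauli d n a j' k') = (\<Prod>m<n. pauli1 d (a m) (j m) (k m) * cnj (pauli1 d (a m) (j' m) (k' m)))"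
  unfolding pauli_def by (simp add: prod.distrib)

lemma pauli_expand:
  assumes "\<And>m. m < n \<Longrightarrow> finite (D m)"
  shows "(\<Sum>a\<in>PS D z n. FP d n B a * cnj (FP d n B a))
    = (\<Sum>k\<in>basis d n. \<Sum>j\<in>basis d n. \<Sum>k'\<in>basis d n. \<Sum>j'\<in>basis d n.
        B k j * cnj (B k' j') * (\<Prod>m<n. \<Sum>x\<in>D m. pauli1 d x (j m) (k m) * cnj (pauli1 d x (j' m) (k' m))))"
proof -
  have FF: "FP d n B a * cnj (FP d n B a) = (\<Sum>k\<in>basis d n. \<Sum>j\<in>basis d n. \<Sum>k'\<in>basis d n. \<Sum>j'\<in>basis d n.
        B k j * pauli d n a j k * (cnj (B k' j') * cnj (pauli d n a j' k')))" for a
  proof -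
    have "FP d n B a * cnj (FP d n B a) = (\<Sum>k\<in>basis d n. \<Sum>j\<in>basis d n. B k j * pauli d n a j k) *
           (\<Sum>k'\<in>basis d n. \<Sum>j'\<in>basis d n. cnj (B k' j') * cnj (pauli d n a j' k'))"
      by (simp add: FP_def tr_def mmul_def)
    also have "\<dots> = (\<Sum>k\<in>basis d n. \<Sum>j\<in>basis d n. B k j * pauli d n a j k *
           (\<Sum>k'\<in>basis d n. \<Sum>j'\<in>basis d n. cnj (B k' j') * cnj (pauli d n a j' k')))"
      by (simp only: sum_distrib_right)
    also have "\<dots> = (\<Sum>k\<in>basis d n. \<Sum>j\<in>basis d n. \<Sum>k'\<in>basis d n. \<Sum>j'\<in>basis d n.
        B k j * pauli d n a j k * (cnj (B k' j') * cnj (pauli d n a j' k')))"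
      by (simp only: sum_distrib_left)
    finally show ?thesis .
  qed
  have "(\<Sum>a\<in>PS D z n. FP d n B a * cnj (FP d n B a))
     = (\<Sum>a\<in>PS D z n. \<Sum>k\<in>basis d n. \<Sum>j\<in>basis d n. \<Sum>k'\<in>basis d n. \<Sum>j'\<in>basis d n.
        B k j * pauli d n a j k * (cnj (B k' j') * cnj (pauli d n a j' k')))"
    by (simp only: FF)
  also have "\<dots> = (\<Sum>k\<in>basis d n. \<Sum>j\<in>basis d n. \<Sum>k'\<in>basis d n. \<Sum>j'\<in>basis d n. \<Sum>a\<in>PS D z n.
        B k j * pauli d n a j k * (cnj (B k' j') * cnj (pauli d n a j' k')))"
    by (rule sum_swap4)
  also have "\<dots> = (\<Sum>k\<in>basis d n. \<Sum>j\<in>basis d n. \<Sum>k'\<in>basis d n. \<Sum>j'\<in>basis d n.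
        B k j * cnj (B k' j') * (\<Sum>a\<in>PS D z n. \<Prod>m<n. pauli1 d (a m) (j m) (k m) * cnj (pauli1 d (a m) (j' m) (k' m))))"
    by (intro sum.cong refl) (simp add: sum_distrib_left pauli_prod_cnj[symmetric] mult_ac)
  also have "\<dots> = (\<Sum>k\<in>basis d n. \<Sum>j\<in>basis d n. \<Sum>k'\<in>basis d n. \<Sum>j'\<in>basis d n.
        B k j * cnj (B k' j') * (\<Prod>m<n. \<Sum>x\<in>D m. pauli1 d x (j m) (k m) * cnj (pauli1 d x (j' m) (k' m))))"
    by (intro sum.cong refl arg_cong2[where f="(*)"] sum_prod_PS[where \<phi>="\<lambda>m x. pauli1 d x (j m) (k m) * cnj (pauli1 d x (j' m) (k' m))" for j k j' k'] assms)
  finally show ?thesis .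
qed

lemma twirl_expand:
  assumes "\<And>m. m < n \<Longrightarrow> finite (D m)"
  shows "(\<Sum>b\<in>PS D z n. GT d n B b)
    = (\<Sum>k\<in>basis d n. \<Sum>j\<in>basis d n. \<Sum>k'\<in>basis d n. \<Sum>j'\<in>basis d n.
        B k j * cnj (B k' j') * (\<Prod>m<n. \<Sum>x\<in>D m. pauli1 d x (k' m) (k m) * cnj (pauli1 d x (j' m) (j m))))"
proof -
  have GG: "GT d n B b = (\<Sum>k\<in>basis d n. \<Sum>j\<in>basis d n. \<Sum>k'\<in>basis d n. \<Sum>j'\<in>basis d n.
        B k j * cnj (B k' j') * (pauli d n b k' k * cnj (pauli d n b j' j)))" for b
  proof -
    have "GT d n B b = (\<Sum>p\<in>basis d n. \<Sum>s\<in>basis d n. \<Sum>r\<in>basis d n. \<Sum>q\<in>basis d n.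
            cnj (B q p) * pauli d n b q r * B r s * cnj (pauli d n b p s))"
      by (simp add: GT_def tr_def mmul_def adj_def sum_distrib_right)
    also have "\<dots> = (\<Sum>r\<in>basis d n. \<Sum>s\<in>basis d n. \<Sum>q\<in>basis d n. \<Sum>p\<in>basis d n.
            cnj (B q p) * pauli d n b q r * B r s * cnj (pauli d n b p s))"
      by (rule reorder4)
    also have "\<dots> = (\<Sum>k\<in>basis d n. \<Sum>j\<in>basis d n. \<Sum>k'\<in>basis d n. \<Sum>j'\<in>basis d n.
        B k j * cnj (B k' j') * (pauli d n b k' k * cnj (pauli d n b j' j)))"
      by (simp add: mult_ac)
    finally show ?thesis .
  qed
  have "(\<Sum>b\<in>PS D z n. GT d n B b)
     = (\<Sum>b\<in>PS D z n. \<Sum>k\<in>basis d n. \<Sum>j\<in>basis d n. \<Sum>k'\<in>basis d n. \<Sum>j'\<in>basis d n.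
        B k j * cnj (B k' j') * (pauli d n b k' k * cnj (pauli d n b j' j)))"
    by (simp only: GG)
  also have "\<dots> = (\<Sum>k\<in>basis d n. \<Sum>j\<in>basis d n. \<Sum>k'\<in>basis d n. \<Sum>j'\<in>basis d n. \<Sum>b\<in>PS D z n.
        B k j * cnj (B k' j') * (pauli d n b k' k * cnj (pauli d n b j' j)))"
    by (rule sum_swap4)
  also have "\<dots> = (\<Sum>k\<in>basis d n. \<Sum>j\<in>basis d n. \<Sum>k'\<in>basis d n. \<Sum>j'\<in>basis d n.
        B k j * cnj (B k' j') * (\<Sum>b\<in>PS D z n. \<Prod>m<n. pauli1 d (b m) (k' m) (k m) * cnj (pauli1 d (b m) (j' m) (j m))))"
    by (intro sum.cong refl) (simp add: sum_distrib_left pauli_prod_cnj)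
  also have "\<dots> = (\<Sum>k\<in>basis d n. \<Sum>j\<in>basis d n. \<Sum>k'\<in>basis d n. \<Sum>j'\<in>basis d n.
        B k j * cnj (B k' j') * (\<Prod>m<n. \<Sum>x\<in>D m. pauli1 d x (k' m) (k m) * cnj (pauli1 d x (j' m) (j m))))"
    by (intro sum.cong refl arg_cong2[where f="(*)"] sum_prod_PS assms)
  finally show ?thesis .
qed

definition DP :: "nat \<Rightarrow> nat \<Rightarrow> nat \<Rightarrow> (nat \<times> nat) set" where
  "DP d i m = (if m = i then {(0,0)} else {..<d} \<times> {..<d})"

definition DT :: "nat \<Rightarrow> nat \<Rightarrow> nat \<Rightarrow> (nat \<times> nat) set" where
  "DT d i m = (if m = i then {..<d} \<times> {..<d} else {(0,0)})"

lemma finite_DP[simp]: "finite (DP d i m)" unfolding DP_def by auto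
lemma finite_DT[simp]: "finite (DT d i m)" unfolding DT_def by auto

lemma basis_lt: "k \<in> basis d n \<Longrightarrow> m < n \<Longrightarrow> k m < d"
  unfolding basis_def by auto

lemma basis_eq: "k \<in> basis d n \<Longrightarrow> j \<in> basis d n \<Longrightarrow> (\<forall>m<n. k m = j m) \<longleftrightarrow> k = j"
  unfolding basis_def by (auto intro!: ext) (metis not_le)

lemma kernel_rel:
  assumes d: "d \<ge> 1" and i: "i < n"
    and k: "k \<in> basis d n" and j: "j \<in> basis d n" and k': "k' \<in> basis d n" and j': "j' \<in> basis d n"
  shows "of_nat d * (\<Prod>m<n. \<Sum>x\<in>DP d i m. pauli1 d x (j m) (k m) * cnj (pauli1 d x (j' m) (k' m)))
       = of_nat d ^ (n - 1) * (\<Prod>m<n. \<Sum>x\<in>DT d i m. pauli1 d x (k' m) (k m) * cnj (pauli1 d x (j' m) (j m)))"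
proof -
  define h where "h m = (if m = i then (if j m = k m \<and> j' m = k' m then 1 else 0)
                         else (if j m = j' m \<and> k m = k' m then 1 else (0::complex)))" for m
  have P: "(\<Sum>x\<in>DP d i m. pauli1 d x (j m) (k m) * cnj (pauli1 d x (j' m) (k' m)))
         = (if m = i then 1 else of_nat d) * h m" if m: "m < n" for m
  proof (cases "m = i")
    case True
    then show ?thesis using basis_lt[OF k m] basis_lt[OF k' m] by (simp add: DP_def h_def sig_zero)
  next
    case False
    then show ?thesis
      using sig_full[OF d basis_lt[OF j m] basis_lt[OF k m] basis_lt[OF j' m] basis_lt[OF k' m]]
      by (simp add: DP_def h_def)
  qed
  have T: "(\<Sum>x\<in>DT d i m. pauli1 d x (k' m) (k m) * cnj (pauli1 d x (j' m) (j m)))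
         = (if m = i then of_nat d else 1) * h m" if m: "m < n" for m
  proof (cases "m = i")
    case True
    then show ?thesis
      using sig_full[OF d basis_lt[OF k' m] basis_lt[OF k m] basis_lt[OF j' m] basis_lt[OF j m]]
      by (auto simp: DT_def h_def)
  next
    case False
    then show ?thesis using basis_lt[OF k m] basis_lt[OF j m] by (auto simp: DT_def h_def sig_zero)
  qed
  have "(\<Prod>m<n. \<Sum>x\<in>DP d i m. pauli1 d x (j m) (k m) * cnj (pauli1 d x (j' m) (k' m)))
      = (\<Prod>m<n. (if m = i then 1 else of_nat d) * h m)"
    by (intro prod.cong refl P) simp
  also have "\<dots> = of_nat d ^ (n - 1) * (\<Prod>m<n. h m)"
    by (simp add: prod.distrib prod_if_point[OF i])
  finally have 1: "(\<Prod>m<n. \<Sum>x\<in>DP d i m. pauli1 d x (j m) (k m) * cnj (pauli1 d x (j' m) (k' m)))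
      = of_nat d ^ (n - 1) * (\<Prod>m<n. h m)" .
  have "(\<Prod>m<n. \<Sum>x\<in>DT d i m. pauli1 d x (k' m) (k m) * cnj (pauli1 d x (j' m) (j m)))
      = (\<Prod>m<n. (if m = i then of_nat d else 1) * h m)"
    by (intro prod.cong refl T) simp
  also have "\<dots> = of_nat d * (\<Prod>m<n. h m)"
    by (simp add: prod.distrib prod_if_point[OF i])
  finally have 2: "(\<Prod>m<n. \<Sum>x\<in>DT d i m. pauli1 d x (k' m) (k m) * cnj (pauli1 d x (j' m) (j m)))
      = of_nat d * (\<Prod>m<n. h m)" .
  show ?thesis unfolding 1 2 by (simp add: mult_ac)
qed

lemma kernel_full:
  assumes d: "d \<ge> 1"
    and k: "k \<in> basis d n" and j: "j \<in> basis d n" and k': "k' \<in> basis d n" and j': "j' \<in> basis d n"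
  shows "(\<Prod>m<n. \<Sum>x\<in>{..<d}\<times>{..<d}. pauli1 d x (j m) (k m) * cnj (pauli1 d x (j' m) (k' m)))
       = (if k' = k \<and> j' = j then of_nat d ^ n else 0)"
proof -
  have "(\<Prod>m<n. \<Sum>x\<in>{..<d}\<times>{..<d}. pauli1 d x (j m) (k m) * cnj (pauli1 d x (j' m) (k' m)))
      = (\<Prod>m<n. if j m = j' m \<and> k m = k' m then of_nat d else 0)"
    by (intro prod.cong refl sig_full d) (auto intro: basis_lt k j k' j')
  also have "\<dots> = (if \<forall>m<n. j m = j' m \<and> k m = k' m then of_nat d ^ n else 0)"
    by (rule prod_if_all)
  also have "(\<forall>m<n. j m = j' m \<and> k m = k' m) \<longleftrightarrow> (k' = k \<and> j' = j)"
    using basis_eq[OF j j'] basis_eq[OF k k'] by auto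
  finally show ?thesis .
qed

lemma sum_delta2:
  assumes "k \<in> S" "j \<in> T" "finite S" "finite T"
  shows "(\<Sum>k'\<in>S. \<Sum>j'\<in>T. f k' j' * (if k' = k \<and> j' = j then c else 0)) = f k j * (c::complex)"
proof -
  have "(\<Sum>k'\<in>S. \<Sum>j'\<in>T. f k' j' * (if k' = k \<and> j' = j then c else 0))
      = (\<Sum>k'\<in>S. if k' = k then (\<Sum>j'\<in>T. if j' = j then f k' j' * c else 0) else 0)"
    by (intro sum.cong refl) (auto intro!: sum.cong)
  also have "\<dots> = f k j * c" using assms by simp
  finally show ?thesis .
qed

definition NB :: "nat \<Rightarrow> nat \<Rightarrow> qop \<Rightarrow> complex" where
  "NB d n B = tr d n (mmul d n (adj B) B)"

lemma NB_expand: "NB d n B = (\<Sum>k\<in>basis d n. \<Sum>j\<in>basis d n. B k j * cnj (B k j))"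
  unfolding NB_def tr_def mmul_def adj_def
  by (subst sum.swap) (simp add: mult.commute)

lemma parseval:
  assumes d: "d \<ge> 1"
  shows "(\<Sum>a\<in>pvecs d n. FP d n B a * cnj (FP d n B a)) = of_nat d ^ n * NB d n B"
proof -
  have "(\<Sum>a\<in>pvecs d n. FP d n B a * cnj (FP d n B a))
     = (\<Sum>k\<in>basis d n. \<Sum>j\<in>basis d n. \<Sum>k'\<in>basis d n. \<Sum>j'\<in>basis d n.
        B k j * cnj (B k' j') * (\<Prod>m<n. \<Sum>x\<in>{..<d}\<times>{..<d}. pauli1 d x (j m) (k m) * cnj (pauli1 d x (j' m) (k' m))))"
    unfolding pvecs_PS by (rule pauli_expand) simp
  also have "\<dots> = (\<Sum>k\<in>basis d n. \<Sum>j\<in>basis d n. \<Sum>k'\<in>basis d n. \<Sum>j'\<in>basis d n.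
        (B k j * cnj (B k' j')) * (if k' = k \<and> j' = j then of_nat d ^ n else 0))"
    by (intro sum.cong refl arg_cong2[where f="(*)"] kernel_full d) auto
  also have "\<dots> = (\<Sum>k\<in>basis d n. \<Sum>j\<in>basis d n. (B k j * cnj (B k j)) * of_nat d ^ n)"
    by (intro sum.cong refl sum_delta2) auto
  also have "\<dots> = of_nat d ^ n * NB d n B"
    by (simp add: NB_expand sum_distrib_left sum_distrib_right mult_ac)
  finally show ?thesis .
qed

lemma zrel:
  assumes d: "d \<ge> 1" and i: "i < n"
  shows "of_nat d * (\<Sum>a\<in>PS (DP d i) (0,0) n. FP d n B a * cnj (FP d n B a))
       = of_nat d ^ (n - 1) * (\<Sum>b\<in>PS (DT d i) (0,0) n. GT d n B b)"
proof -
  have "of_nat d * (\<Sum>a\<in>PS (DP d i) (0,0) n. FP d n B a * cnj (FP d n B a))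
     = (\<Sum>k\<in>basis d n. \<Sum>j\<in>basis d n. \<Sum>k'\<in>basis d n. \<Sum>j'\<in>basis d n.
        B k j * cnj (B k' j') * (of_nat d * (\<Prod>m<n. \<Sum>x\<in>DP d i m. pauli1 d x (j m) (k m) * cnj (pauli1 d x (j' m) (k' m)))))"
    by (simp add: pauli_expand sum_distrib_left mult_ac)
  also have "\<dots> = (\<Sum>k\<in>basis d n. \<Sum>j\<in>basis d n. \<Sum>k'\<in>basis d n. \<Sum>j'\<in>basis d n.
        B k j * cnj (B k' j') * (of_nat d ^ (n - 1) * (\<Prod>m<n. \<Sum>x\<in>DT d i m. pauli1 d x (k' m) (k m) * cnj (pauli1 d x (j' m) (j m)))))"
    by (intro sum.cong refl arg_cong2[where f="(*)"] kernel_rel d i) auto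
  also have "\<dots> = of_nat d ^ (n - 1) * (\<Sum>b\<in>PS (DT d i) (0,0) n. GT d n B b)"
    by (simp add: twirl_expand sum_distrib_left mult_ac)
  finally show ?thesis .
qed

lemma eqb_mmul_left: "eqb d n X Y \<Longrightarrow> eqb d n (mmul d n Z X) (mmul d n Z Y)"
  by (rule mmul_cong[OF eqb_refl])

lemma eqb_mmul_right: "eqb d n X Y \<Longrightarrow> eqb d n (mmul d n X Z) (mmul d n Y Z)"
  by (rule mmul_cong[OF _ eqb_refl])

lemma cancel_WU:
  assumes WU: "eqb d n (mmul d n W U) idop"
  shows "eqb d n (mmul d n W (mmul d n U R)) R"
proof -
  have "mmul d n W (mmul d n U R) = mmul d n (mmul d n W U) R" by (simp only: mmul_assoc)
  moreover have "eqb d n (mmul d n (mmul d n W U) R) (mmul d n idop R)" by (rule eqb_mmul_right[OF WU])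
  ultimately show ?thesis using mmul_id_left eqb_trans by metis
qed

lemma NB_inv:
  assumes WU: "eqb d n (mmul d n (adj U) U) idop"
  shows "NB d n (mmul d n (mmul d n U B) (adj U)) = NB d n B"
proof -
  let ?W = "adj U"
  have "mmul d n (adj (mmul d n (mmul d n U B) ?W)) (mmul d n (mmul d n U B) ?W)
      = mmul d n U (mmul d n (adj B) (mmul d n ?W (mmul d n U (mmul d n B ?W))))"
    by (simp only: mmul_assoc adj_mmul adj_adj)
  moreover have "eqb d n (mmul d n U (mmul d n (adj B) (mmul d n ?W (mmul d n U (mmul d n B ?W)))))
                          (mmul d n U (mmul d n (adj B) (mmul d n B ?W)))"
    by (intro eqb_mmul_left cancel_WU WU)
  ultimately have "NB d n (mmul d n (mmul d n U B) ?W) = tr d n (mmul d n U (mmul d n (adj B) (mmul d n B ?W)))"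
    unfolding NB_def by (metis tr_cong)
  also have "\<dots> = tr d n (mmul d n (mmul d n (adj B) (mmul d n B ?W)) U)" by (rule tr_comm)
  also have "mmul d n (mmul d n (adj B) (mmul d n B ?W)) U = mmul d n (adj B) (mmul d n B (mmul d n ?W U))"
    by (simp only: mmul_assoc)
  also have "tr d n \<dots> = tr d n (mmul d n (adj B) (mmul d n B idop))"
    by (intro tr_cong eqb_mmul_left WU)
  also have "\<dots> = NB d n B"
    unfolding NB_def by (intro tr_cong eqb_mmul_left mmul_id_right)
  finally show ?thesis .
qed

lemma GT_inv:
  assumes WU: "eqb d n (mmul d n (adj U) U) idop"
    and UP: "eqb d n (mmul d n U P) (mmul d n P U)"
  shows "tr d n (mmul d n (mmul d n (mmul d n (adj (mmul d n (mmul d n U B) (adj U))) P) (mmul d n (mmul d n U B) (adj U))) (adj P))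
       = tr d n (mmul d n (mmul d n (mmul d n (adj B) P) B) (adj P))"
proof -
  let ?W = "adj U"
  have e1: "eqb d n (mmul d n ?W (mmul d n P U)) P"
  proof -
    have "eqb d n (mmul d n ?W (mmul d n P U)) (mmul d n ?W (mmul d n U P))"
      by (rule eqb_mmul_left[OF eqb_sym[OF UP]])
    moreover have "eqb d n (mmul d n ?W (mmul d n U P)) P" by (rule cancel_WU[OF WU])
    ultimately show ?thesis by (rule eqb_trans)
  qed
  have e2: "eqb d n (mmul d n (adj P) ?W) (mmul d n ?W (adj P))"
    using adj_cong[OF UP] by (simp add: adj_mmul)
  have e3: "eqb d n (mmul d n ?W (mmul d n (adj P) U)) (adj P)"
  proof -
    have "mmul d n ?W (mmul d n (adj P) U) = mmul d n (mmul d n ?W (adj P)) U" by (simp only: mmul_assoc)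
    moreover have "eqb d n (mmul d n (mmul d n ?W (adj P)) U) (mmul d n (mmul d n (adj P) ?W) U)"
      by (rule eqb_mmul_right[OF eqb_sym[OF e2]])
    moreover have "mmul d n (mmul d n (adj P) ?W) U = mmul d n (adj P) (mmul d n ?W U)" by (simp only: mmul_assoc)
    moreover have "eqb d n (mmul d n (adj P) (mmul d n ?W U)) (mmul d n (adj P) idop)"
      by (rule eqb_mmul_left[OF WU])
    ultimately show ?thesis using mmul_id_right eqb_trans by metis
  qed
  have "mmul d n (mmul d n (mmul d n (adj (mmul d n (mmul d n U B) ?W)) P) (mmul d n (mmul d n U B) ?W)) (adj P)
      = mmul d n U (mmul d n (adj B) (mmul d n (mmul d n ?W (mmul d n P U)) (mmul d n B (mmul d n ?W (adj P)))))"
    by (simp only: mmul_assoc adj_mmul adj_adj)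
  moreover have "eqb d n (mmul d n U (mmul d n (adj B) (mmul d n (mmul d n ?W (mmul d n P U)) (mmul d n B (mmul d n ?W (adj P))))))
      (mmul d n U (mmul d n (adj B) (mmul d n P (mmul d n B (mmul d n ?W (adj P))))))"
    by (intro eqb_mmul_left eqb_mmul_right e1)
  ultimately have "tr d n (mmul d n (mmul d n (mmul d n (adj (mmul d n (mmul d n U B) ?W)) P) (mmul d n (mmul d n U B) ?W)) (adj P))
      = tr d n (mmul d n U (mmul d n (adj B) (mmul d n P (mmul d n B (mmul d n ?W (adj P))))))"
    by (metis tr_cong)
  also have "\<dots> = tr d n (mmul d n (mmul d n (adj B) (mmul d n P (mmul d n B (mmul d n ?W (adj P))))) U)"
    by (rule tr_comm)
  also have "mmul d n (mmul d n (adj B) (mmul d n P (mmul d n B (mmul d n ?W (adj P))))) U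
      = mmul d n (adj B) (mmul d n P (mmul d n B (mmul d n ?W (mmul d n (adj P) U))))"
    by (simp only: mmul_assoc)
  also have "tr d n \<dots> = tr d n (mmul d n (adj B) (mmul d n P (mmul d n B (adj P))))"
    by (intro tr_cong eqb_mmul_left e3)
  also have "\<dots> = tr d n (mmul d n (mmul d n (mmul d n (adj B) P) B) (adj P))"
    by (simp only: mmul_assoc)
  finally show ?thesis .
qed

lemma prod_indicator: "finite A \<Longrightarrow> (\<Prod>m\<in>A. if P m then 1 else 0) = (if \<forall>m\<in>A. P m then 1 else (0::complex))"
  by (induct A rule: finite_induct) auto

lemma sum_delta_c1: "finite S \<Longrightarrow> (\<Sum>l\<in>S. f l * (if l = a then c else 0)) = (if a \<in> S then f a * (c::complex) else 0)"
proof -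
  assume "finite S"
  have "(\<Sum>l\<in>S. f l * (if l = a then c else 0)) = (\<Sum>l\<in>S. if l = a then f l * c else 0)" by (rule sum.cong) auto
  then show ?thesis using \<open>finite S\<close> by simp
qed

lemma sum_delta_c2: "finite S \<Longrightarrow> (\<Sum>l\<in>S. (if l = a then c else 0) * f l) = (if a \<in> S then (c::complex) * f a else 0)"
proof -
  assume "finite S"
  have "(\<Sum>l\<in>S. (if l = a then c else 0) * f l) = (\<Sum>l\<in>S. if l = a then c * f l else 0)" by (rule sum.cong) auto
  then show ?thesis using \<open>finite S\<close> by simp
qed

lemma DT_vals:
  assumes "b \<in> PS (DT d i) (0,0) n" "i < n"
  shows "\<And>m. m \<noteq> i \<Longrightarrow> b m = (0,0)" and "fst (b i) < d" and "snd (b i) < d"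
proof -
  fix m assume "m \<noteq> i"
  then show "b m = (0,0)" using assms unfolding PS_def DT_def by (cases "m < n") auto
next
  have "b i \<in> {..<d} \<times> {..<d}" using assms unfolding PS_def DT_def by auto
  then show "fst (b i) < d" "snd (b i) < d" by auto
qed

lemma pauli_local:
  assumes i: "i < n" and b: "b \<in> PS (DT d i) (0,0) n"
    and l: "l \<in> basis d n" and j: "j \<in> basis d n"
  shows "pauli d n b l j = (if l = j(i := (j i + fst (b i)) mod d) then omega d ^ (snd (b i) * j i) else 0)"
proof -
  have bm: "b m = (0,0)" if "m \<noteq> i" for m using DT_vals(1)[OF b i that] .
  have "pauli d n b l j = pauli1 d (b i) (l i) (j i) * (\<Prod>m\<in>{..<n} - {i}. pauli1 d (b m) (l m) (j m))"
    unfolding pauli_def using i by (subst prod.remove[of _ i]) auto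
  also have "(\<Prod>m\<in>{..<n} - {i}. pauli1 d (b m) (l m) (j m)) = (\<Prod>m\<in>{..<n} - {i}. if l m = j m then 1 else 0)"
    by (intro prod.cong refl) (auto simp: bm sig_zero basis_lt[OF j])
  also have "\<dots> = (if \<forall>m\<in>{..<n} - {i}. l m = j m then 1 else 0)" by (rule prod_indicator) simp
  also have "pauli1 d (b i) (l i) (j i) = (if l i = (j i + fst (b i)) mod d then omega d ^ (snd (b i) * j i) else 0)"
    by (simp add: pauli1_def)
  also have "(l i = (j i + fst (b i)) mod d \<and> (\<forall>m\<in>{..<n} - {i}. l m = j m)) \<longleftrightarrow> l = j(i := (j i + fst (b i)) mod d)"
  proof
    assume h: "l i = (j i + fst (b i)) mod d \<and> (\<forall>m\<in>{..<n} - {i}. l m = j m)"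
    show "l = j(i := (j i + fst (b i)) mod d)"
    proof
      fix m show "l m = (j(i := (j i + fst (b i)) mod d)) m"
        using h l j unfolding basis_def by (cases "m = i"; cases "m < n") auto
    qed
  next
    assume "l = j(i := (j i + fst (b i)) mod d)"
    then show "l i = (j i + fst (b i)) mod d \<and> (\<forall>m\<in>{..<n} - {i}. l m = j m)" by auto
  qed
  ultimately show ?thesis by auto
qed

lemma H_comm:
  assumes d: "d \<ge> 1" and i: "i < n" and iS: "i \<notin> S" and H: "acts_only_on d n S H"
    and b: "b \<in> PS (DT d i) (0,0) n"
  shows "eqb d n (mmul d n H (pauli d n b)) (mmul d n (pauli d n b) H)"
  unfolding eqb_def
proof (intro ballI)
  fix k j assume k: "k \<in> basis d n" and j: "j \<in> basis d n"
  define s where "s = fst (b i)"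
  define t where "t = snd (b i)"
  have s: "s < d" and t: "t < d" using DT_vals(2,3)[OF b i] by (auto simp: s_def t_def)
  have ki: "k i < d" and ji: "j i < d" using basis_lt[OF k i] basis_lt[OF j i] .
  define jj where "jj = j(i := (j i + s) mod d)"
  define kk where "kk = k(i := (k i + d - s) mod d)"
  have jj: "jj \<in> basis d n" using j s i unfolding jj_def basis_def by auto
  have kk: "kk \<in> basis d n" using k s i unfolding kk_def basis_def by auto
  obtain h where h: "\<And>k j. k \<in> basis d n \<Longrightarrow> j \<in> basis d n \<Longrightarrow>
      H k j = (if (\<forall>m<n. m \<notin> S \<longrightarrow> k m = j m) then h (restr S k) (restr S j) else 0)"
    using H unfolding acts_only_on_def by blast
  have L: "mmul d n H (pauli d n b) k j = H k jj * omega d ^ (t * j i)"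
  proof -
    have "mmul d n H (pauli d n b) k j = (\<Sum>l\<in>basis d n. H k l * (if l = jj then omega d ^ (t * j i) else 0))"
      unfolding mmul_def by (intro sum.cong refl) (simp add: pauli_local[OF i b _ j] jj_def s_def t_def)
    also have "\<dots> = H k jj * omega d ^ (t * j i)" using jj by (simp add: sum_delta_c1)
    finally show ?thesis .
  qed
  have eqv: "k = l(i := (l i + s) mod d) \<longleftrightarrow> l = kk" if l: "l \<in> basis d n" for l
  proof
    assume e: "k = l(i := (l i + s) mod d)"
    then have "k i = (s + l i) mod d" by (simp add: add.commute)
    then have "l i = (k i + d - s) mod d" using shift_unique[OF ki s basis_lt[OF l i]] by simp
    then show "l = kk" using e unfolding kk_def by (auto intro!: ext)
  next
    assume e: "l = kk"
    have "k i = (s + kk i) mod d" using shift_unique[OF ki s, of "kk i"] s unfolding kk_def by simp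
    then show "k = l(i := (l i + s) mod d)" using e unfolding kk_def by (auto intro!: ext simp: add.commute)
  qed
  have R: "mmul d n (pauli d n b) H k j = omega d ^ (t * kk i) * H kk j"
  proof -
    have "mmul d n (pauli d n b) H k j = (\<Sum>l\<in>basis d n. (if l = kk then omega d ^ (t * l i) else 0) * H l j)"
      unfolding mmul_def by (intro sum.cong refl) (simp add: pauli_local[OF i b k] eqv s_def[symmetric] t_def[symmetric])
    also have "\<dots> = (\<Sum>l\<in>basis d n. (if l = kk then omega d ^ (t * kk i) else 0) * H l j)"
      by (intro sum.cong refl) auto
    also have "\<dots> = omega d ^ (t * kk i) * H kk j" using kk by (simp add: sum_delta_c2)
    finally show ?thesis .
  qed
  have key: "k i = (j i + s) mod d \<longleftrightarrow> kk i = j i"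
    using shift_unique[OF ki s ji] unfolding kk_def by (auto simp: add.commute)
  have C: "(\<forall>m<n. m \<notin> S \<longrightarrow> k m = jj m) \<longleftrightarrow> (\<forall>m<n. m \<notin> S \<longrightarrow> kk m = j m)"
  proof -
    have "(\<forall>m<n. m \<notin> S \<longrightarrow> k m = jj m) \<longleftrightarrow> (k i = (j i + s) mod d \<and> (\<forall>m<n. m \<noteq> i \<longrightarrow> m \<notin> S \<longrightarrow> k m = j m))"
      using i iS unfolding jj_def by auto
    also have "\<dots> \<longleftrightarrow> (kk i = j i \<and> (\<forall>m<n. m \<noteq> i \<longrightarrow> m \<notin> S \<longrightarrow> k m = j m))" using key by simp
    also have "\<dots> \<longleftrightarrow> (\<forall>m<n. m \<notin> S \<longrightarrow> kk m = j m)"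
      using i iS unfolding kk_def by auto
    finally show ?thesis .
  qed
  have rj: "restr S jj = restr S j" using iS unfolding restr_def jj_def by (auto intro!: ext)
  have rk: "restr S kk = restr S k" using iS unfolding restr_def kk_def by (auto intro!: ext)
  show "mmul d n H (pauli d n b) k j = mmul d n (pauli d n b) H k j"
    unfolding L R h[OF k jj] h[OF kk j] rj rk C using key i iS by auto
qed

lemma U_comm:
  assumes d: "d \<ge> 1" and i: "i < n" and iS: "i \<notin> S" and H: "acts_only_on d n S H"
    and b: "b \<in> PS (DT d i) (0,0) n"
  shows "eqb d n (mmul d n (evol d n H t) (pauli d n b)) (mmul d n (pauli d n b) (evol d n H t))"
  unfolding evol_def
proof (rule mexp_commQ)
  let ?c = "- (\<i> * complex_of_real t)"
  have "eqb d n (mmul d n H (pauli d n b)) (mmul d n (pauli d n b) H)" by (rule H_comm[OF assms])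
  then show "eqb d n (mmul d n (\<lambda>k j. ?c * H k j) (pauli d n b)) (mmul d n (pauli d n b) (\<lambda>k j. ?c * H k j))"
  proof -
    have 1: "mmul d n (\<lambda>k j. ?c * H k j) (pauli d n b) = (\<lambda>k j. ?c * mmul d n H (pauli d n b) k j)"
      unfolding mmul_def by (intro ext) (simp add: sum_distrib_left mult_ac)
    have 2: "mmul d n (pauli d n b) (\<lambda>k j. ?c * H k j) = (\<lambda>k j. ?c * mmul d n (pauli d n b) H k j)"
      unfolding mmul_def by (intro ext) (simp add: sum_distrib_left mult_ac)
    show ?thesis unfolding 1 2 using \<open>eqb d n (mmul d n H (pauli d n b)) (mmul d n (pauli d n b) H)\<close>
      unfolding eqb_def by simp
  qed
qed

definition Tot :: "nat \<Rightarrow> nat \<Rightarrow> qop \<Rightarrow> real" where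
  "Tot d n B = (\<Sum>a\<in>pvecs d n. pdist d n B a)"

definition Zi :: "nat \<Rightarrow> nat \<Rightarrow> nat \<Rightarrow> qop \<Rightarrow> real" where
  "Zi d n i B = (\<Sum>a\<in>PS (DP d i) (0,0) n. pdist d n B a)"

definition ZC :: "nat \<Rightarrow> nat \<Rightarrow> nat \<Rightarrow> qop \<Rightarrow> complex" where
  "ZC d n i B = (\<Sum>a\<in>PS (DP d i) (0,0) n. FP d n B a * cnj (FP d n B a))"

lemma pdist_FP: "pdist d n B a = (cmod (FP d n B a))\<^sup>2 / real d ^ (2 * n)"
  unfolding pdist_def FP_def ..

lemma pdist_nonneg: "0 \<le> pdist d n B a"
  unfolding pdist_def by simp

lemma sum_cmod_sq: "complex_of_real (\<Sum>a\<in>A. (cmod (f a))\<^sup>2) = (\<Sum>a\<in>A. f a * cnj (f a))"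
  by (simp only: of_real_sum complex_norm_square)

lemma Tot_NB:
  assumes d: "d \<ge> 1"
  shows "Tot d n B = Re (NB d n B) / real d ^ n"
proof -
  have "complex_of_real (\<Sum>a\<in>pvecs d n. (cmod (FP d n B a))\<^sup>2) = of_nat d ^ n * NB d n B"
    unfolding sum_cmod_sq by (rule parseval[OF d])
  then have "(\<Sum>a\<in>pvecs d n. (cmod (FP d n B a))\<^sup>2) = real d ^ n * Re (NB d n B)"
  proof -
    assume h: "complex_of_real (\<Sum>a\<in>pvecs d n. (cmod (FP d n B a))\<^sup>2) = of_nat d ^ n * NB d n B"
    have "of_nat d ^ n * NB d n B = complex_of_real (real d ^ n) * NB d n B" by simp
    then have "Re (of_nat d ^ n * NB d n B) = real d ^ n * Re (NB d n B)"
      by simp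
    then show ?thesis using arg_cong[OF h, of Re] by simp
  qed
  then have "Tot d n B = real d ^ n * Re (NB d n B) / real d ^ (2 * n)"
    unfolding Tot_def pdist_FP by (simp add: sum_divide_distrib[symmetric])
  also have "\<dots> = Re (NB d n B) / real d ^ n"
    using d by (simp add: power_mult_distrib mult_2 power_add)
  finally show ?thesis .
qed

lemma Zi_ZC: "Zi d n i B = Re (ZC d n i B) / real d ^ (2 * n)"
proof -
  have "Re (ZC d n i B) = (\<Sum>a\<in>PS (DP d i) (0,0) n. (cmod (FP d n B a))\<^sup>2)"
    unfolding ZC_def sum_cmod_sq[symmetric] by simp
  then show ?thesis unfolding Zi_def pdist_FP by (simp add: sum_divide_distrib)
qed

lemma PS_DP_eq:
  assumes i: "i < n" and d: "d \<ge> 1"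
  shows "PS (DP d i) (0,0) n = {a \<in> pvecs d n. a i = (0,0)}"
proof (rule set_eqI, rule iffI)
  fix a assume a: "a \<in> PS (DP d i) (0,0) n"
  have "fst (a m) < d \<and> snd (a m) < d" if "m < n" for m
  proof (cases "m = i")
    case True then show ?thesis using a that d unfolding PS_def DP_def by auto
  next
    case False then show ?thesis using a that unfolding PS_def DP_def by (auto simp: mem_Times_iff)
  qed
  moreover have "a i = (0,0)" using a i unfolding PS_def DP_def by auto
  ultimately show "a \<in> {a \<in> pvecs d n. a i = (0,0)}" using a unfolding PS_def pvecs_def by auto
next
  fix a assume a: "a \<in> {a \<in> pvecs d n. a i = (0,0)}"
  have "a m \<in> DP d i m" if "m < n" for m
  proof (cases "m = i")
    case True then show ?thesis using a unfolding DP_def by auto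
  next
    case False then show ?thesis using a that unfolding pvecs_def DP_def by (auto simp: mem_Times_iff)
  qed
  then show "a \<in> PS (DP d i) (0,0) n" using a unfolding PS_def pvecs_def by auto
qed

lemma Zi_bounds:
  assumes "i < n" "d \<ge> 1"
  shows "0 \<le> Zi d n i B" "Zi d n i B \<le> Tot d n B"
proof -
  show "0 \<le> Zi d n i B" unfolding Zi_def by (intro sum_nonneg pdist_nonneg)
  show "Zi d n i B \<le> Tot d n B" unfolding Zi_def Tot_def PS_DP_eq[OF assms]
    by (intro sum_mono2) (auto intro: pdist_nonneg)
qed

lemma influence_decomp:
  assumes d: "d \<ge> 1"
  shows "influence d n B = (\<Sum>i<n. Tot d n B - Zi d n i B)"
proof -
  have w: "real (weight n a) = (\<Sum>i<n. if a i \<noteq> (0,0) then 1 else 0)" for a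
  proof -
    have "{i. i < n \<and> a i \<noteq> (0,0)} = {i \<in> {..<n}. a i \<noteq> (0,0)}" by auto
    then have "real (weight n a) = (\<Sum>i\<in>{i \<in> {..<n}. a i \<noteq> (0,0)}. 1)" unfolding weight_def by simp
    also have "\<dots> = (\<Sum>i<n. if a i \<noteq> (0,0) then 1 else 0)" by (rule sum.inter_filter) simp
    finally show ?thesis .
  qed
  have "influence d n B = (\<Sum>a\<in>pvecs d n. \<Sum>i<n. (if a i \<noteq> (0,0) then 1 else 0) * pdist d n B a)"
    unfolding influence_def w by (simp add: sum_distrib_right)
  also have "\<dots> = (\<Sum>i<n. \<Sum>a\<in>pvecs d n. (if a i \<noteq> (0,0) then 1 else 0) * pdist d n B a)"
    by (rule sum.swap)
  also have "\<dots> = (\<Sum>i<n. Tot d n B - Zi d n i B)"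
  proof (rule sum.cong[OF refl])
    fix i assume "i \<in> {..<n}"
    then have i: "i < n" by simp
    have "Tot d n B = (\<Sum>a\<in>pvecs d n. (if a i \<noteq> (0,0) then 1 else 0) * pdist d n B a)
                    + (\<Sum>a\<in>pvecs d n. (if a i = (0,0) then 1 else 0) * pdist d n B a)"
      unfolding Tot_def sum.distrib[symmetric] by (intro sum.cong refl) auto
    moreover have "(\<Sum>a\<in>pvecs d n. (if a i = (0,0) then 1 else 0) * pdist d n B a) = Zi d n i B"
      unfolding Zi_def PS_DP_eq[OF i d] by (subst sum.inter_filter) (auto intro!: sum.cong)
    ultimately show "(\<Sum>a\<in>pvecs d n. (if a i \<noteq> (0,0) then 1 else 0) * pdist d n B a) = Tot d n B - Zi d n i B"
      by simp
  qed
  finally show ?thesis .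
qed

lemma ZC_inv:
  assumes d: "d \<ge> 1" and i: "i < n" and iS: "i \<notin> S" and H: "acts_only_on d n S H"
    and herm: "hermitian d n H"
  shows "ZC d n i (mmul d n (mmul d n (evol d n H t) B) (adj (evol d n H t))) = ZC d n i B"
proof -
  let ?U = "evol d n H t"
  let ?B' = "mmul d n (mmul d n ?U B) (adj ?U)"
  have G: "GT d n ?B' b = GT d n B b" if b: "b \<in> PS (DT d i) (0,0) n" for b
    unfolding GT_def by (rule GT_inv[OF evol_unitary[OF herm] U_comm[OF d i iS H b]])
  have "of_nat d * ZC d n i ?B' = of_nat d * ZC d n i B"
    unfolding ZC_def zrel[OF d i] using G by simp
  then show ?thesis using d by simp
qed

lemma Tot_inv:
  assumes d: "d \<ge> 1" and herm: "hermitian d n H"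
  shows "Tot d n (mmul d n (mmul d n (evol d n H t) B) (adj (evol d n H t))) = Tot d n B"
  unfolding Tot_NB[OF d] NB_inv[OF evol_unitary[OF herm]] ..

lemma norm2_one:
  assumes d: "d \<ge> 1" and "norm2 d n B = 1"
  shows "Tot d n B = 1"
proof -
  have "sqrt (Re (NB d n B) / real d ^ n) = 1" using assms(2) unfolding norm2_def NB_def .
  then have "sqrt (Re (NB d n B) / real d ^ n) = sqrt 1" by (simp only: real_sqrt_one)
  then have "Re (NB d n B) / real d ^ n = 1" by (simp only: real_sqrt_eq_iff)
  then show ?thesis unfolding Tot_NB[OF d] .
qed

lemma norm2_idop:
  assumes d: "d \<ge> 1"
  shows "norm2 d n idop = 1"
proof -
  have "NB d n idop = (\<Sum>k\<in>basis d n. \<Sum>j\<in>basis d n. if k = j then 1 else 0)"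
    unfolding NB_expand by (intro sum.cong refl) (simp add: idop_def)
  also have "\<dots> = of_nat (card (basis d n))" by simp
  also have "\<dots> = of_nat d ^ n" by (simp add: card_basis)
  finally have "NB d n idop = of_nat d ^ n" .
  then show ?thesis unfolding norm2_def NB_def[symmetric] using d by simp
qed

theorem mainTheorem10:
  fixes d n k :: nat and H :: qop and S :: "nat set" and t :: real
  assumes "d \<ge> 2" and "n \<ge> 1"
    and "hermitian d n H"
    and "S \<subseteq> {..<n}" and "card S = k"
    and "acts_only_on d n S H"
  shows "CiS d n (evol d n H t) \<le> real k"
proof -
  have d: "d \<ge> 1" using assms(1) by simp
  note herm = assms(3) and SH = assms(6)
  have finS: "finite S" using assms(4) finite_subset by blast
  let ?U = "evol d n H t"
  have bound: "\<bar>influence d n (mmul d n (mmul d n ?U B) (adj ?U)) - influence d n B\<bar> \<le> real k"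
    if B: "norm2 d n B = 1" for B
  proof -
    let ?B' = "mmul d n (mmul d n ?U B) (adj ?U)"
    have TB: "Tot d n B = 1" by (rule norm2_one[OF d B])
    have TB': "Tot d n ?B' = 1" using Tot_inv[OF d herm] TB by simp
    define f where "f i = Zi d n i B - Zi d n i ?B'" for i
    have "influence d n ?B' - influence d n B = (\<Sum>i<n. (Tot d n ?B' - Zi d n i ?B') - (Tot d n B - Zi d n i B))"
      unfolding influence_decomp[OF d] sum_subtractf ..
    also have "\<dots> = (\<Sum>i<n. f i)" unfolding f_def TB TB' by (intro sum.cong refl) simp
    also have "\<dots> = (\<Sum>i\<in>S. f i)"
    proof (rule sum.mono_neutral_right)
      show "finite {..<n}" by simp
      show "S \<subseteq> {..<n}" by (rule assms(4))
      show "\<forall>i\<in>{..<n} - S. f i = 0"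
      proof
        fix i assume "i \<in> {..<n} - S"
        then have i: "i < n" and iS: "i \<notin> S" by auto
        show "f i = 0" unfolding f_def Zi_ZC ZC_inv[OF d i iS SH herm] by simp
      qed
    qed
    finally have eq: "influence d n ?B' - influence d n B = (\<Sum>i\<in>S. f i)" .
    have fb: "\<bar>f i\<bar> \<le> 1" if "i \<in> S" for i
    proof -
      have i: "i < n" using that assms(4) by auto
      have "0 \<le> Zi d n i B" "Zi d n i B \<le> 1" using Zi_bounds[OF i d, of B] TB by auto
      moreover have "0 \<le> Zi d n i ?B'" "Zi d n i ?B' \<le> 1" using Zi_bounds[OF i d, of ?B'] TB' by auto
      ultimately show ?thesis unfolding f_def by linarith
    qed
    have "\<bar>\<Sum>i\<in>S. f i\<bar> \<le> (\<Sum>i\<in>S. \<bar>f i\<bar>)" by (rule sum_abs)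
    also have "\<dots> \<le> (\<Sum>i\<in>S. 1)" by (intro sum_mono fb)
    also have "\<dots> = real k" using assms(5) by simp
    finally show ?thesis unfolding eq .
  qed
  show ?thesis
    unfolding CiS_def
  proof (rule cSup_least)
    show "{\<bar>influence d n (mmul d n (mmul d n ?U B) (adj ?U)) - influence d n B\<bar> | B. norm2 d n B = 1} \<noteq> {}"
      using norm2_idop[OF d] by blast
    fix x assume "x \<in> {\<bar>influence d n (mmul d n (mmul d n ?U B) (adj ?U)) - influence d n B\<bar> | B. norm2 d n B = 1}"
    then show "x \<le> real k" using bound by blast
  qed
qed

end
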